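(* There is an absolute constant $c>0$ such that for every integer $\ell\ge1$, all $n\le m$ and every $X=(x_1,\dots,x_m)\in[n]^m$, $\min_T \ell\text{-DistTree}_T(X)\le c\cdot\mathsf{UB}^{\ell}(X)$, the minimum being over all BSTs $T$ on $[n]$.
   Context: $\log(x)=\log_2(\max\{2,x\})$. For a BST $T$ on $[n]$ with root $r$, let $d_T(a,b)$ be the number of edges between $a$ and $b$ in $T$, set $x_0=r$, and define $\ell\text{-DistTree}_T(X)=\sum_{i=1}^m\min_{j\in[i-\ell,i),\,j\ge0}\{d_T(x_i,x_j)+1\}$. $\mathsf{UB}^{\ell}(X)=\sum_{t=1}^m\min_{t'\in[t-\ell,t),\,t'\ge1}\log\big(|x_t-x_{t'}|+\rho_t(x_{t'})\big)$, where $\rho_t(a)$ is the number of distinct keys accessed strictly between the last time $s<t$ with $x_s=a$ and time $t$ (all keys considered accessed at time $0$), and the term for $t=1$ (empty range) is interpreted as $\log n$. *)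

theory Defs
  imports Complex_Main "HOL-Library.Tree"
begin

definition lg :: "real \<Rightarrow> real" where
  "lg x = log 2 (max 2 x)"

fun bst_path :: "nat tree \<Rightarrow> nat \<Rightarrow> nat list" where
  "bst_path Leaf a = []"
| "bst_path (Node l x r) a =
     x # (if a < x then bst_path l a else if x < a then bst_path r a else [])"

fun lcp_len :: "nat list \<Rightarrow> nat list \<Rightarrow> nat" where
  "lcp_len (x # xs) (y # ys) = (if x = y then Suc (lcp_len xs ys) else 0)"
| "lcp_len _ _ = 0"

definition tree_dist :: "nat tree \<Rightarrow> nat \<Rightarrow> nat \<Rightarrow> nat" where
  "tree_dist T a b =
     length (bst_path T a) + length (bst_path T b)
     - 2 * lcp_len (bst_path T a) (bst_path T b)"

text \<open>Access sequence X = [x_1,...,x_m] as a list; x_i = X ! (i-1); x_0 = root.\<close>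
definition acc :: "nat tree \<Rightarrow> nat list \<Rightarrow> nat \<Rightarrow> nat" where
  "acc T X j = (if j = 0 then value T else X ! (j - 1))"

definition DistTree :: "nat \<Rightarrow> nat tree \<Rightarrow> nat list \<Rightarrow> nat" where
  "DistTree l T X =
     (\<Sum>i=1..length X. Min ((\<lambda>j. tree_dist T (acc T X i) (acc T X j) + 1) ` {i - l..<i}))"

text \<open>rho_t(a): number of distinct keys accessed strictly between the last time s<t
  with x_s = a (time 0 counts as an access of every key) and time t.\<close>
definition rho :: "nat list \<Rightarrow> nat \<Rightarrow> nat \<Rightarrow> nat" where
  "rho X t a =
     (let s = Max {s. s < t \<and> (s = 0 \<or> X ! (s - 1) = a)}
      in card {X ! (u - 1) | u. s < u \<and> u < t})"

definition UB :: "nat \<Rightarrow> nat \<Rightarrow> nat list \<Rightarrow> real" where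
  "UB l n X =
     (\<Sum>t=1..length X.
        (let S = {t'. 1 \<le> t' \<and> t - l \<le> t' \<and> t' < t} in
         if S = {} then lg (real n)
         else Min ((\<lambda>t'. lg (\<bar>real (X ! (t - 1)) - real (X ! (t' - 1))\<bar>
                              + real (rho X t (X ! (t' - 1))))) ` S)))"

end

theory Submission imports Defs begin

definition sameb :: "nat \<Rightarrow> nat \<Rightarrow> nat \<Rightarrow> bool" where
  "sameb h p q = (\<exists>j. j*2^h < p \<and> p < (j+1)*2^h \<and> j*2^h < q \<and> q < (j+1)*2^h)"

lemma sameb_sym: "sameb h p q = sameb h q p"
  unfolding sameb_def by blast

lemma sameb_Suc: assumes "sameb h p q" shows "sameb (Suc h) p q"
proof -
  obtain j where j: "j*2^h < p" "p < (j+1)*2^h" "j*2^h < q" "q < (j+1)*2^h"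
    using assms unfolding sameb_def by blast
  have 1: "(j div 2)*2^(Suc h) \<le> j*2^h"
  proof -
    have "(j div 2)*2^(Suc h) = ((j div 2)*2)*2^h" by simp
    also have "\<dots> \<le> j*2^h" by (intro mult_le_mono1) simp
    finally show ?thesis .
  qed
  have 2: "(j+1)*2^h \<le> (j div 2 + 1)*2^(Suc h)"
  proof -
    have "(j+1)*2^h \<le> ((j div 2 + 1)*2)*2^h" by (intro mult_le_mono1) simp
    also have "\<dots> = (j div 2 + 1)*2^(Suc h)" by simp
    finally show ?thesis .
  qed
  show ?thesis unfolding sameb_def
    by (rule exI[of _ "j div 2"]) (use j 1 2 in linarith)
qed

lemma sameb_mono: "h \<le> h' \<Longrightarrow> sameb h p q \<Longrightarrow> sameb h' p q"
  by (induction h' rule: dec_induct) (auto intro: sameb_Suc)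

lemma sameb_sep: assumes "sameb h p q" "p \<le> k*2^h" "k*2^h \<le> q" shows False
proof -
  obtain j where j: "j*2^h < p" "p < (j+1)*2^h" "j*2^h < q" "q < (j+1)*2^h"
    using assms unfolding sameb_def by blast
  have "j*2^h < k*2^h" using j assms by linarith
  hence "j < k" by simp
  have "k*2^h < (j+1)*2^h" using j assms by linarith
  hence "k < j+1" using mult_less_cancel2 by blast
  with \<open>j < k\<close> show False by simp
qed

lemma length_path: "length (bst_path T a) \<le> height T"
  by (induction T) auto

lemma td_le: "tree_dist T a b \<le> 2 * height T"
  unfolding tree_dist_def using length_path[of T a] length_path[of T b] by linarith

lemma td_left: "a < x \<Longrightarrow> b < x \<Longrightarrow> tree_dist (Node l x r) a b = tree_dist l a b"
  unfolding tree_dist_def by simp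

lemma td_right: "x < a \<Longrightarrow> x < b \<Longrightarrow> tree_dist (Node l x r) a b = tree_dist r a b"
  unfolding tree_dist_def by simp

fun mk :: "nat \<Rightarrow> nat \<Rightarrow> nat \<Rightarrow> nat \<Rightarrow> nat tree" where
  "mk n s 0 j = Leaf"
| "mk n s (Suc h) j = (let r = (2*j+1)*2^h in
     if r \<le> s then mk n s h (2*j+1)
     else if s + n < r then mk n s h (2*j)
     else Node (mk n s h (2*j)) (r - s) (mk n s h (2*j+1)))"

lemma height_mk: "height (mk n s h j) \<le> h"
proof (induction h arbitrary: j)
  case (Suc h)
  have "\<And>i. height (mk n s h i) \<le> h" by (rule Suc)
  then show ?case by (simp add: Let_def le_SucI)
qed simp

lemma aux1: "R = A + (q::nat) \<Longrightarrow> B = R + q \<Longrightarrow> 0 < q \<Longrightarrow> R \<le> s \<Longrightarrow> (1 \<le> k \<and> k \<le> n \<and> R < k + s \<and> k + s < B) =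
     (1 \<le> k \<and> k \<le> n \<and> A < k + s \<and> k + s < B)"
  by auto
lemma aux2: "R = A + (q::nat) \<Longrightarrow> B = R + q \<Longrightarrow> 0 < q \<Longrightarrow> s + n < R \<Longrightarrow> (1 \<le> k \<and> k \<le> n \<and> A < k + s \<and> k + s < R) =
     (1 \<le> k \<and> k \<le> n \<and> A < k + s \<and> k + s < B)"
  by auto
lemma aux3: "R = A + (q::nat) \<Longrightarrow> B = R + q \<Longrightarrow> 0 < q \<Longrightarrow> \<not> R \<le> s \<Longrightarrow> \<not> s + n < R \<Longrightarrow> (k = R - s \<or>
                1 \<le> k \<and> k \<le> n \<and> A < k + s \<and> k + s < R \<or>
                1 \<le> k \<and> k \<le> n \<and> R < k + s \<and> k + s < B) =
     (1 \<le> k \<and> k \<le> n \<and> A < k + s \<and> k + s < B)"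
  by (cases "k + s < R"; cases "k + s = R") auto

lemma set_mk: "set_tree (mk n s h j) = {k. 1 \<le> k \<and> k \<le> n \<and> j*2^h < k+s \<and> k+s < (j+1)*2^h}"
proof (induction h arbitrary: j)
  case 0
  then show ?case by auto
next
  case (Suc h)
  define A where "A = (2*j)*2^h"
  define R where "R = (2*j+1)*2^h"
  define B where "B = (2*j+1+1)*2^h"
  have e1: "j*2^Suc h = A" unfolding A_def by simp
  have e2: "(j+1)*2^Suc h = B" unfolding B_def by simp
  have e3: "R = A + 2^h" "B = R + 2^h" unfolding A_def R_def B_def by (simp_all add: algebra_simps)
  have IHl: "set_tree (mk n s h (2*j)) = {k. 1 \<le> k \<and> k \<le> n \<and> A < k+s \<and> k+s < R}"
    using Suc[of "2*j"] unfolding A_def R_def by simp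
  have IHr: "set_tree (mk n s h (2*j+1)) = {k. 1 \<le> k \<and> k \<le> n \<and> R < k+s \<and> k+s < B}"
    using Suc[of "2*j+1"] unfolding B_def R_def by simp
  have mk: "mk n s (Suc h) j = (if R \<le> s then mk n s h (2*j+1)
     else if s + n < R then mk n s h (2*j)
     else Node (mk n s h (2*j)) (R - s) (mk n s h (2*j+1)))"
    unfolding R_def by (simp add: Let_def)
  have "(0::nat) < 2^h" by simp
  show ?case
  proof (rule set_eqI)
    fix k
    have mem: "k \<in> set_tree (mk n s (Suc h) j) \<longleftrightarrow> (if R \<le> s then (1 \<le> k \<and> k \<le> n \<and> R < k+s \<and> k+s < B)
      else if s + n < R then (1 \<le> k \<and> k \<le> n \<and> A < k+s \<and> k+s < R)
      else (k = R - s \<or> (1 \<le> k \<and> k \<le> n \<and> A < k+s \<and> k+s < R) \<or> (1 \<le> k \<and> k \<le> n \<and> R < k+s \<and> k+s < B)))"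
      unfolding mk using IHl IHr by (simp del: mk.simps)
    show "k \<in> set_tree (mk n s (Suc h) j) \<longleftrightarrow> k \<in> {k. 1 \<le> k \<and> k \<le> n \<and> j*2^Suc h < k+s \<and> k+s < (j+1)*2^Suc h}"
      unfolding e1 e2 mem mem_Collect_eq using e3 \<open>(0::nat) < 2^h\<close>
        aux1[of R A "2^h" B s k n] aux2[of R A "2^h" B s n k] aux3[of R A "2^h" B s n k]
      by (cases "R \<le> s"; cases "s + n < R") simp_all
  qed
qed

lemma bst_mk: "bst (mk n s h j)"
proof (induction h arbitrary: j)
  case 0
  then show ?case by simp
next
  case (Suc h)
  have "\<forall>k\<in>set_tree (mk n s h (2*j)). k < (2*j+1)*2^h - s"
    unfolding set_mk by (auto simp: algebra_simps)
  moreover have "\<forall>k\<in>set_tree (mk n s h (2*j+1)). (2*j+1)*2^h - s < k"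
    unfolding set_mk by (auto simp: algebra_simps)
  ultimately show ?case using Suc by (auto simp: Let_def)
qed

lemma td_mk:
  assumes "a \<in> set_tree (mk n s h j)" "b \<in> set_tree (mk n s h j)"
  shows "tree_dist (mk n s h j) a b \<le> 2 * card {h'. h' < h \<and> \<not> sameb h' (a+s) (b+s)}"
  using assms
proof (induction h arbitrary: j)
  case 0
  then show ?case by simp
next
  case (Suc h)
  show ?case
  proof (cases "sameb h (a+s) (b+s)")
    case False
    have "\<forall>h'<Suc h. \<not> sameb h' (a+s) (b+s)"
      using False sameb_mono by (metis less_Suc_eq_le)
    hence D: "{h'. h' < Suc h \<and> \<not> sameb h' (a+s) (b+s)} = {..<Suc h}" by auto
    show ?thesis unfolding D using td_le[of "mk n s (Suc h) j" a b] height_mk[of n s "Suc h" j] by simp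
  next
    case True
    have D: "{h'. h' < Suc h \<and> \<not> sameb h' (a+s) (b+s)} = {h'. h' < h \<and> \<not> sameb h' (a+s) (b+s)}"
      using True less_Suc_eq by auto
    define R where "R = (2*j+1)*2^h"
    have mk: "mk n s (Suc h) j = (if R \<le> s then mk n s h (2*j+1)
       else if s + n < R then mk n s h (2*j)
       else Node (mk n s h (2*j)) (R - s) (mk n s h (2*j+1)))"
      unfolding R_def by (simp add: Let_def)
    have sep: False if "p \<le> R" "R \<le> q" "p = a+s \<and> q = b+s \<or> p = b+s \<and> q = a+s" for p q
      using that sameb_sep[of h p q "2*j+1"] True sameb_sym unfolding R_def by blast
    show ?thesis
    proof (cases "R \<le> s")
      case True
      then show ?thesis using Suc.prems Suc.IH[of "2*j+1"] unfolding D mk by simp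
    next
      case c1: False
      show ?thesis
      proof (cases "s + n < R")
        case True
        then show ?thesis using c1 Suc.prems Suc.IH[of "2*j"] unfolding D mk by simp
      next
        case c2: False
        have T: "mk n s (Suc h) j = Node (mk n s h (2*j)) (R - s) (mk n s h (2*j+1))"
          using c1 c2 mk by simp
        have L: "\<forall>k\<in>set_tree (mk n s h (2*j)). k+s < R"
          unfolding set_mk R_def by auto
        have Rr: "\<forall>k\<in>set_tree (mk n s h (2*j+1)). R < k+s"
          unfolding set_mk R_def by auto
        have noR: "a \<noteq> R - s" "b \<noteq> R - s"
        proof -
          show "a \<noteq> R - s"
          proof
            assume "a = R - s"
            hence "a + s = R" using c1 by simp
            thus False using sep[of "a+s" "b+s"] sep[of "b+s" "a+s"] by linarith
          qed
          show "b \<noteq> R - s"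
          proof
            assume "b = R - s"
            hence "b + s = R" using c1 by simp
            thus False using sep[of "a+s" "b+s"] sep[of "b+s" "a+s"] by linarith
          qed
        qed
        have aa: "a \<in> set_tree (mk n s h (2*j)) \<or> a \<in> set_tree (mk n s h (2*j+1))"
          using Suc.prems(1) noR unfolding T by auto
        have bb: "b \<in> set_tree (mk n s h (2*j)) \<or> b \<in> set_tree (mk n s h (2*j+1))"
          using Suc.prems(2) noR unfolding T by auto
        show ?thesis
        proof (cases "a \<in> set_tree (mk n s h (2*j))")
          case True
          hence "b \<in> set_tree (mk n s h (2*j))"
            using bb L Rr sep[of "a+s" "b+s"] by fastforce
          moreover have "a + s < R" "b + s < R" using True calculation L by auto
          moreover have "a < R - s" "b < R - s" using calculation(2,3) c1 by auto
          ultimately show ?thesis using True Suc.IH[of "2*j"] unfolding D T by (simp add: td_left)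
        next
          case False
          hence a2: "a \<in> set_tree (mk n s h (2*j+1))" using aa by simp
          hence "b \<in> set_tree (mk n s h (2*j+1))"
            using bb L Rr sep[of "b+s" "a+s"] by fastforce
          moreover have "R < a + s" "R < b + s" using a2 calculation Rr by auto
          moreover have "R - s < a" "R - s < b" using calculation(2,3) c1 by auto
          ultimately show ?thesis using a2 Suc.IH[of "2*j+1"] unfolding D T by (simp add: td_right)
        qed
      qed
    qed
  qed
qed


lemma card_dvd:
  assumes "0 < (q::nat)" "q dvd N"
  shows "card {s. s < N \<and> q dvd (c+s)} \<le> N div q"
proof -
  let ?S = "{s. s < N \<and> q dvd (c+s)}"
  have inj: "inj_on (\<lambda>s. s div q) ?S"
  proof (rule inj_onI)
    have key: "s1 = s2" if "s1 \<in> ?S" "s2 \<in> ?S" "s1 div q = s2 div q" "s1 \<le> s2" for s1 s2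
    proof -
      have "q dvd (c+s2) - (c+s1)" using that by (intro dvd_diff_nat) auto
      hence d: "q dvd s2 - s1" by simp
      have "s1 = q*(s1 div q) + s1 mod q" "s2 = q*(s2 div q) + s2 mod q" by simp_all
      moreover have "q*(s1 div q) = q*(s2 div q)" using that(3) by simp
      ultimately have "s2 - s1 < q" using that(3) mod_less_divisor[OF assms(1), of s2] by linarith
      with d have "s2 - s1 = 0" using dvd_imp_le by (metis neq0_conv not_le)
      thus ?thesis using that(4) by simp
    qed
    fix x y assume "x \<in> ?S" "y \<in> ?S" "x div q = y div q"
    thus "x = y" using key[of x y] key[of y x] by (cases "x \<le> y") auto
  qed
  have img: "(\<lambda>s. s div q) ` ?S \<subseteq> {..<N div q}"
  proof
    fix y assume "y \<in> (\<lambda>s. s div q) ` ?S"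
    then obtain s where s: "s < N" "y = s div q" by auto
    obtain k where k: "N = q*k" using assms(2) by blast
    have "s div q < k" using s k assms(1) by (simp add: div_less_iff_less_mult mult.commute)
    thus "y \<in> {..<N div q}" using s k assms(1) by simp
  qed
  show ?thesis using card_inj_on_le[OF inj img] by simp
qed

lemma notsame_ex:
  assumes "0 < p" "p \<le> q" "\<not> sameb h p q"
  shows "\<exists>k\<in>{p..q}. (2::nat)^h dvd k"
proof (rule ccontr)
  assume no: "\<not> (\<exists>k\<in>{p..q}. (2::nat)^h dvd k)"
  define j where "j = (p-1) div 2^h"
  have dm: "j * 2^h + (p-1) mod 2^h = p-1" unfolding j_def by (rule div_mult_mod_eq)
  have md: "(p-1) mod 2^h < (2::nat)^h" by simp
  have jj: "(j+1)*2^h = j*2^h + (2::nat)^h" by (simp add: algebra_simps)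
  have 1: "j*2^h < p" using dm assms(1) by linarith
  have 2: "p \<le> (j+1)*2^h" using dm md jj assms(1) by linarith
  have "(2::nat)^h dvd (j+1)*2^h" by simp
  hence "(j+1)*2^h \<notin> {p..q}" using no by blast
  hence "q < (j+1)*2^h" using 2 by simp
  hence "sameb h p q" unfolding sameb_def using 1 2 assms(2) by (intro exI[of _ j]) simp
  with assms(3) show False by simp
qed

lemma count_h_le:
  assumes "0 < a" "a \<le> b" "h \<le> K"
  shows "card {s. s < (2::nat)^K \<and> \<not> sameb h (a+s) (b+s)} \<le> (b - a + 1) * 2^(K-h)"
proof -
  have sub: "{s. s < (2::nat)^K \<and> \<not> sameb h (a+s) (b+s)} \<subseteq> (\<Union>i\<in>{..b-a}. {s. s < 2^K \<and> 2^h dvd (a+i+s)})"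
  proof
    fix s assume "s \<in> {s. s < (2::nat)^K \<and> \<not> sameb h (a+s) (b+s)}"
    hence s: "s < 2^K" "\<not> sameb h (a+s) (b+s)" by auto
    have "\<exists>k\<in>{a+s..b+s}. 2^h dvd k" by (rule notsame_ex[OF _ _ s(2)]) (use assms in simp_all)
    then obtain k where k: "k \<in> {a+s..b+s}" "2^h dvd k" by blast
    have e: "a + (k - a - s) + s = k" and i: "k - a - s \<in> {..b-a}" using k(1) by auto
    have "s \<in> {s. s < 2^K \<and> 2^h dvd (a+(k-a-s)+s)}" unfolding e using s k by simp
    thus "s \<in> (\<Union>i\<in>{..b-a}. {s. s < 2^K \<and> 2^h dvd (a+i+s)})" using i by blast
  qed
  have "card {s. s < (2::nat)^K \<and> \<not> sameb h (a+s) (b+s)} \<le> card (\<Union>i\<in>{..b-a}. {s. s < (2::nat)^K \<and> 2^h dvd (a+i+s)})"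
    by (rule card_mono[OF _ sub]) auto
  also have "\<dots> \<le> (\<Sum>i\<in>{..b-a}. card {s. s < (2::nat)^K \<and> 2^h dvd (a+i+s)})"
    by (rule card_UN_le) simp
  also have "\<dots> \<le> (\<Sum>i\<in>{..b-a}. 2^(K-h))"
  proof (rule sum_mono)
    fix i
    have "card {s. s < (2::nat)^K \<and> 2^h dvd (a+i+s)} \<le> 2^K div 2^h"
      by (rule card_dvd) (use assms(3) in \<open>simp_all add: le_imp_power_dvd\<close>)
    also have "\<dots> = 2^(K-h)" using assms(3) by (simp add: power_diff)
    finally show "card {s. s < (2::nat)^K \<and> 2^h dvd (a+i+s)} \<le> 2^(K-h)" .
  qed
  also have "\<dots> = (b - a + 1) * 2^(K-h)" by simp
  finally show ?thesis .
qed

lemma count_h: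
  assumes "0 < a" "0 < b" "h \<le> K"
  shows "card {s. s < (2::nat)^K \<and> \<not> sameb h (a+s) (b+s)} \<le> (max a b - min a b + 1) * 2^(K-h)"
proof (cases "a \<le> b")
  case True
  then show ?thesis using count_h_le[OF assms(1) True assms(3)] by simp
next
  case False
  have "card {s. s < (2::nat)^K \<and> \<not> sameb h (a+s) (b+s)} = card {s. s < (2::nat)^K \<and> \<not> sameb h (b+s) (a+s)}"
    using sameb_sym by metis
  then show ?thesis using count_h_le[OF assms(2) _ assms(3), of a] False by simp
qed

definition fL :: "nat \<Rightarrow> nat \<Rightarrow> real" where
  "fL L h = (if h < L then 1 else 2^L * (1/2)^h)"

lemma sum_fL_aux:
  "(\<Sum>h<M. fL L h) \<le> (if M \<le> L then real M else L + 2 - 2 * 2^L * (1/2)^M)"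
proof (induction M)
  case 0
  then show ?case by simp
next
  case (Suc M)
  show ?case
  proof (cases "Suc M \<le> L")
    case True
    then show ?thesis using Suc by (simp add: fL_def)
  next
    case F: False
    show ?thesis
    proof (cases "M = L")
      case True
      have "(2::real)^L * (1/2)^L = 1" by (simp add: power_one_over)
      then show ?thesis using Suc True by (simp add: fL_def)
    next
      case False
      with F have "L < M" by simp
      then show ?thesis using Suc by (simp add: fL_def)
    qed
  qed
qed

lemma sum_fL: "(\<Sum>h<M. fL L h) \<le> L + 2"
proof -
  have p: "2 * (2::real)^L * (1/2)^M \<ge> 0" by simp
  show ?thesis
  proof (cases "M \<le> L")
    case True
    then show ?thesis using sum_fL_aux[where M=M and L=L] by simp
  next
    case False
    then have "(\<Sum>h<M. fL L h) \<le> L + 2 - 2 * 2^L * (1/2)^M" using sum_fL_aux[where M=M and L=L] by simp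
    then show ?thesis using p by linarith
  qed
qed


lemma ex_pow: "\<exists>K. x \<le> (2::nat)^K \<and> (K = 0 \<or> 2^(K-1) < x)"
proof -
  have ex: "\<exists>K. x \<le> (2::nat)^K" using less_exp[of x] by (metis less_imp_le)
  define K where "K = (LEAST K. x \<le> (2::nat)^K)"
  have 1: "x \<le> 2^K" unfolding K_def by (rule LeastI_ex[OF ex])
  have "K = 0 \<or> 2^(K-1) < x"
  proof (cases K)
    case (Suc k)
    have "\<not> x \<le> 2^k" using not_less_Least[of k "\<lambda>K. x \<le> (2::nat)^K"] Suc unfolding K_def by simp
    then show ?thesis using Suc by simp
  qed simp
  with 1 show ?thesis by blast
qed

lemma lg_ge1: "lg x \<ge> 1"
  unfolding lg_def by simp

lemma lg_mono: "x \<le> y \<Longrightarrow> lg x \<le> lg y"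
  unfolding lg_def by simp

lemma lg_succ: "x \<ge> 0 \<Longrightarrow> lg (x+1) \<le> lg x + 1"
proof -
  assume "x \<ge> 0"
  have "max 2 (x+1) \<le> 2 * max 2 x" using \<open>x \<ge> 0\<close> by (auto simp: max_def)
  hence "log 2 (max 2 (x+1)) \<le> log 2 (2 * max 2 x)" by (subst log_le_cancel_iff) auto
  also have "\<dots> = 1 + log 2 (max 2 x)" by (subst log_mult) auto
  finally show ?thesis unfolding lg_def by simp
qed

lemma pow_lg:
  assumes "K = 0 \<or> 2^(K-1) < (x::nat)"
  shows "real K \<le> lg (real x) + 1"
proof (cases "K = 0")
  case True
  then show ?thesis using lg_ge1[of "real x"] by simp
next
  case False
  hence "(2::real)^(K-1) < real x" using assms by (metis of_nat_less_iff of_nat_numeral of_nat_power)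
  hence "log 2 ((2::real)^(K-1)) < log 2 (real x)"
    by (subst log_less_cancel_iff) auto
  hence "real (K-1) < log 2 (real x)" by (simp add: log_nat_power)
  moreover have "log 2 (real x) \<le> lg (real x)" unfolding lg_def
    using \<open>(2::real)^(K-1) < real x\<close> by (subst log_le_cancel_iff) auto
  ultimately show ?thesis using False by linarith
qed

lemma card_filter: "finite A \<Longrightarrow> card {x \<in> A. P x} = (\<Sum>x\<in>A. if P x then 1 else 0)"
proof -
  assume "finite A"
  have "{x \<in> A. P x} = A \<inter> Collect P" by auto
  thus ?thesis using \<open>finite A\<close> by (simp add: sum.If_cases)
qed

lemma pair_bound:
  assumes "a \<in> {1..n}" "b \<in> {1..n}" "n \<le> 2^K"
  shows "(\<Sum>s<2^K. real (tree_dist (mk n s (Suc K) 0) a b + 1)) \<le> 2^K * 11 * lg \<bar>real a - real b\<bar>"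
proof -
  define \<delta> where "\<delta> = max a b - min a b"
  have rd: "real \<delta> = \<bar>real a - real b\<bar>" unfolding \<delta>_def by (simp add: of_nat_diff)
  obtain L where L: "\<delta>+1 \<le> 2^L" "L = 0 \<or> 2^(L-1) < \<delta>+1" using ex_pow[of "\<delta>+1"] by blast
  define C where "C s = card {h. h < Suc K \<and> \<not> sameb h (a+s) (b+s)}" for s
  have td: "tree_dist (mk n s (Suc K) 0) a b \<le> 2 * C s" if "s < 2^K" for s
  proof -
    have "a \<in> set_tree (mk n s (Suc K) 0)" "b \<in> set_tree (mk n s (Suc K) 0)"
      unfolding set_mk using assms that by auto
    thus ?thesis unfolding C_def by (rule td_mk)
  qed
  have swap: "(\<Sum>s<(2::nat)^K. C s) = (\<Sum>h<Suc K. card {s. s < 2^K \<and> \<not> sameb h (a+s) (b+s)})"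
  proof -
    have "(\<Sum>s<(2::nat)^K. C s) = (\<Sum>s<(2::nat)^K. \<Sum>h<Suc K. if \<not> sameb h (a+s) (b+s) then 1 else 0)"
      unfolding C_def by (intro sum.cong refl) (simp add: card_filter[symmetric] lessThan_def)
    also have "\<dots> = (\<Sum>h<Suc K. \<Sum>s<(2::nat)^K. if \<not> sameb h (a+s) (b+s) then 1 else 0)"
      by (rule sum.swap)
    also have "\<dots> = (\<Sum>h<Suc K. card {s. s < 2^K \<and> \<not> sameb h (a+s) (b+s)})"
      by (intro sum.cong refl) (simp add: card_filter[symmetric] lessThan_def)
    finally show ?thesis .
  qed
  have ch: "real (card {s. s < (2::nat)^K \<and> \<not> sameb h (a+s) (b+s)}) \<le> 2^K * fL L h" if "h < Suc K" for h
  proof (cases "h < L")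
    case True
    have "card {s. s < (2::nat)^K \<and> \<not> sameb h (a+s) (b+s)} \<le> card {..<(2::nat)^K}"
      by (rule card_mono) auto
    then show ?thesis using True unfolding fL_def by simp
  next
    case False
    have "card {s. s < (2::nat)^K \<and> \<not> sameb h (a+s) (b+s)} \<le> (\<delta> + 1) * 2^(K-h)"
      unfolding \<delta>_def using count_h[of a b h K] assms that by simp
    also have "\<dots> \<le> 2^L * 2^(K-h)" using L(1) by (intro mult_le_mono1) simp
    finally have cn: "card {s. s < (2::nat)^K \<and> \<not> sameb h (a+s) (b+s)} \<le> 2^L * 2^(K-h)" .
    have "real (card {s. s < (2::nat)^K \<and> \<not> sameb h (a+s) (b+s)}) \<le> real ((2::nat)^L * 2^(K-h))"
      using cn by (rule of_nat_mono)
    also have "\<dots> = 2^L * 2^(K-h)" by simp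
    also have "\<dots> = 2^K * (2^L * (1/2)^h)"
      using that by (simp add: power_diff power_one_over)
    finally show ?thesis using False unfolding fL_def by simp
  qed
  have sumC: "(\<Sum>s<(2::nat)^K. real (C s)) \<le> 2^K * (real L + 2)"
  proof -
    have "(\<Sum>s<(2::nat)^K. real (C s)) = real (\<Sum>s<(2::nat)^K. C s)" by simp
    also have "\<dots> = (\<Sum>h<Suc K. real (card {s. s < 2^K \<and> \<not> sameb h (a+s) (b+s)}))"
      unfolding swap by simp
    also have "\<dots> \<le> (\<Sum>h<Suc K. 2^K * fL L h)" by (rule sum_mono) (use ch in simp)
    also have "\<dots> = 2^K * (\<Sum>h<Suc K. fL L h)" by (rule sum_distrib_left[symmetric])
    also have "\<dots> \<le> 2^K * (real L + 2)" using sum_fL[of L "Suc K"] by (intro mult_left_mono) auto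
    finally show ?thesis .
  qed
  have "(\<Sum>s<2^K. real (tree_dist (mk n s (Suc K) 0) a b + 1)) \<le> (\<Sum>s<(2::nat)^K. 2 * real (C s) + 1)"
  proof (rule sum_mono)
    fix s :: nat assume "s \<in> {..<2^K}"
    hence "tree_dist (mk n s (Suc K) 0) a b \<le> 2 * C s" using td by (simp del: mk.simps)
    hence "real (tree_dist (mk n s (Suc K) 0) a b) \<le> real (2 * C s)" by (rule of_nat_mono)
    thus "real (tree_dist (mk n s (Suc K) 0) a b + 1) \<le> 2 * real (C s) + 1" by (simp del: mk.simps)
  qed
  also have "\<dots> = 2 * (\<Sum>s<(2::nat)^K. real (C s)) + 2^K" by (simp add: sum.distrib sum_distrib_left)
  also have "\<dots> \<le> 2^K * (2 * real L + 5)" using sumC by (simp add: algebra_simps)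
  also have "\<dots> \<le> 2^K * (11 * lg \<bar>real a - real b\<bar>)"
  proof -
    have "real L \<le> lg (real (\<delta>+1)) + 1" using pow_lg[OF L(2)] by simp
    also have "\<dots> \<le> lg (real \<delta>) + 2" using lg_succ[of "real \<delta>"] by (simp add: add.commute)
    finally have "2 * real L + 5 \<le> 11 * lg (real \<delta>)" using lg_ge1[of "real \<delta>"] by linarith
    thus ?thesis unfolding rd by (intro mult_left_mono) auto
  qed
  finally show ?thesis by simp
qed


theorem lemma8:
  shows "\<exists>c>0. \<forall>l n (X :: nat list). 1 \<le> l \<and> n \<le> length X \<and> set X \<subseteq> {1..n} \<longrightarrow>
           (\<exists>T. bst T \<and> set_tree T = {1..n} \<and> real (DistTree l T X) \<le> c * UB l n X)"
proof (rule exI[of _ 11], intro conjI allI impI)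
  fix l n :: nat and X :: "nat list"
  assume H: "1 \<le> l \<and> n \<le> length X \<and> set X \<subseteq> {1..n}"
  define m where "m = length X"
  show "\<exists>T. bst T \<and> set_tree T = {1..n} \<and> real (DistTree l T X) \<le> 11 * UB l n X"
  proof (cases "X = []")
    case True
    then have "n = 0" using H by simp
    then show ?thesis using True by (intro exI[of _ Leaf]) (simp add: DistTree_def UB_def)
  next
    case False
    hence m1: "1 \<le> m" unfolding m_def by (cases X) auto
    have Xin: "X ! i \<in> {1..n}" if "i < m" for i using H that unfolding m_def by (meson nth_mem subsetD)
    have n1: "1 \<le> n" using Xin[of 0] m1 by auto
    obtain K where K: "n \<le> 2^K" "K = 0 \<or> 2^(K-1) < n" using ex_pow[of n] by blast
    define T where "T s = mk n s (Suc K) 0" for s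
    have bstT: "bst (T s)" for s unfolding T_def by (rule bst_mk)
    have setT: "set_tree (T s) = {1..n}" if "s < 2^K" for s
      unfolding T_def set_mk using K(1) that by auto
    define u where "u t = (let S = {t'. 1 \<le> t' \<and> t - l \<le> t' \<and> t' < t} in
         if S = {} then lg (real n)
         else Min ((\<lambda>t'. lg (\<bar>real (X ! (t - 1)) - real (X ! (t' - 1))\<bar>
                              + real (rho X t (X ! (t' - 1))))) ` S))" for t
    have UBu: "UB l n X = (\<Sum>t=1..m. u t)" unfolding UB_def u_def m_def by simp
    have step: "\<exists>j\<in>{t-l..<t}. (\<Sum>s<(2::nat)^K. real (tree_dist (T s) (acc (T s) X t) (acc (T s) X j) + 1))
                  \<le> 2^K * 11 * u t" if t: "t \<in> {1..m}" for t
    proof (cases "t = 1")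
      case True
      have S: "{t'. 1 \<le> t' \<and> t - l \<le> t' \<and> t' < t} = {}" using True by auto
      have ut: "u t = lg (real n)" unfolding u_def using S by simp
      have "(\<Sum>s<(2::nat)^K. real (tree_dist (T s) (acc (T s) X t) (acc (T s) X 0) + 1))
            \<le> (\<Sum>s<(2::nat)^K. real (2 * K + 3))"
      proof (rule sum_mono)
        fix s
        have "tree_dist (T s) (acc (T s) X t) (acc (T s) X 0) \<le> 2 * height (T s)" by (rule td_le)
        also have "\<dots> \<le> 2 * Suc K" using height_mk[of n s "Suc K" 0] unfolding T_def by simp
        finally show "real (tree_dist (T s) (acc (T s) X t) (acc (T s) X 0) + 1) \<le> real (2 * K + 3)" by simp
      qed
      also have "\<dots> = 2^K * (2 * real K + 3)" by simp
      also have "\<dots> \<le> 2^K * (11 * u t)"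
      proof -
        have "real K \<le> lg (real n) + 1" by (rule pow_lg[OF K(2)])
        hence "2 * real K + 3 \<le> 11 * lg (real n)" using lg_ge1[of "real n"] by linarith
        thus ?thesis unfolding ut by (intro mult_left_mono) auto
      qed
      finally have bound: "(\<Sum>s<(2::nat)^K. real (tree_dist (T s) (acc (T s) X t) (acc (T s) X 0) + 1)) \<le> 2^K * (11 * u t)" .
      show ?thesis by (rule bexI[of _ 0]) (use bound True H in simp_all)
    next
      case False
      define S where "S = {t'. 1 \<le> t' \<and> t - l \<le> t' \<and> t' < t}"
      define f where "f t' = lg (\<bar>real (X ! (t - 1)) - real (X ! (t' - 1))\<bar> + real (rho X t (X ! (t' - 1))))" for t'
      have Sne: "S \<noteq> {}" using False t H unfolding S_def by (intro ex_in_conv[THEN iffD1] exI[of _ "t-1"]) auto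
      have finS: "finite S" unfolding S_def by auto
      have ut: "u t = Min (f ` S)" unfolding u_def S_def[symmetric] f_def using Sne by simp
      have "Min (f ` S) \<in> f ` S" by (rule Min_in) (use finS Sne in simp_all)
      then obtain t' where t': "t' \<in> S" "f t' = Min (f ` S)" by (auto simp only: image_iff)
      have t'r: "1 \<le> t'" "t - l \<le> t'" "t' < t" using t'(1) unfolding S_def by auto
      have a: "X ! (t-1) \<in> {1..n}" using Xin[of "t-1"] t by auto
      have b: "X ! (t'-1) \<in> {1..n}" using Xin[of "t'-1"] t t'r by auto
      have "(\<Sum>s<(2::nat)^K. real (tree_dist (T s) (acc (T s) X t) (acc (T s) X t') + 1))
          = (\<Sum>s<(2::nat)^K. real (tree_dist (mk n s (Suc K) 0) (X ! (t-1)) (X ! (t'-1)) + 1))"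
        using t t'r unfolding acc_def T_def by (simp del: mk.simps)
      also have "\<dots> \<le> 2^K * 11 * lg \<bar>real (X ! (t-1)) - real (X ! (t'-1))\<bar>"
        by (rule pair_bound[OF a b K(1)])
      also have "\<dots> \<le> 2^K * 11 * u t"
      proof -
        have "lg \<bar>real (X ! (t-1)) - real (X ! (t'-1))\<bar> \<le> f t'" unfolding f_def by (rule lg_mono) simp
        thus ?thesis unfolding ut t'(2)[symmetric] by simp
      qed
      finally have bound: "(\<Sum>s<(2::nat)^K. real (tree_dist (T s) (acc (T s) X t) (acc (T s) X t') + 1)) \<le> 2^K * 11 * u t" .
      show ?thesis
      proof (rule bexI[where x=t'])
        show "t' \<in> {t-l..<t}" using t'r by simp
      qed (rule bound)
    qed
    define P where "P t j \<longleftrightarrow> j \<in> {t-l..<t} \<and>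
       (\<Sum>s<(2::nat)^K. real (tree_dist (T s) (acc (T s) X t) (acc (T s) X j) + 1)) \<le> 2^K * 11 * u t" for t j
    have step': "\<exists>j. P t j" if "t \<in> {1..m}" for t
      using step[OF that] unfolding P_def Bex_def .
    define J where "J t = (SOME j. P t j)" for t
    have J: "J t \<in> {t-l..<t} \<and>
       (\<Sum>s<(2::nat)^K. real (tree_dist (T s) (acc (T s) X t) (acc (T s) X (J t)) + 1)) \<le> 2^K * 11 * u t"
      if "t \<in> {1..m}" for t
    proof -
      have "P t (J t)" unfolding J_def by (rule someI_ex[OF step'[OF that]])
      thus ?thesis unfolding P_def .
    qed
    have DT: "real (DistTree l (T s) X) \<le> (\<Sum>t=1..m. real (tree_dist (T s) (acc (T s) X t) (acc (T s) X (J t)) + 1))" for s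
    proof -
      have "DistTree l (T s) X \<le> (\<Sum>t=1..m. tree_dist (T s) (acc (T s) X t) (acc (T s) X (J t)) + 1)"
        unfolding DistTree_def m_def[symmetric]
      proof (rule sum_mono)
        fix t assume "t \<in> {1..m}"
        thus "Min ((\<lambda>j. tree_dist (T s) (acc (T s) X t) (acc (T s) X j) + 1) ` {t - l..<t})
              \<le> tree_dist (T s) (acc (T s) X t) (acc (T s) X (J t)) + 1"
          by (intro Min_le finite_imageI finite_atLeastLessThan imageI conjunct1[OF J])
      qed
      hence "real (DistTree l (T s) X) \<le> real (\<Sum>t=1..m. tree_dist (T s) (acc (T s) X t) (acc (T s) X (J t)) + 1)"
        by (rule of_nat_mono)
      also have "\<dots> = (\<Sum>t=1..m. real (tree_dist (T s) (acc (T s) X t) (acc (T s) X (J t)) + 1))"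
        by (rule of_nat_sum)
      finally show ?thesis .
    qed
    have tot: "(\<Sum>s<(2::nat)^K. real (DistTree l (T s) X)) \<le> 2^K * (11 * UB l n X)"
    proof -
      have "(\<Sum>s<(2::nat)^K. real (DistTree l (T s) X))
          \<le> (\<Sum>s<(2::nat)^K. \<Sum>t=1..m. real (tree_dist (T s) (acc (T s) X t) (acc (T s) X (J t)) + 1))"
        by (rule sum_mono) (rule DT)
      also have "\<dots> = (\<Sum>t=1..m. \<Sum>s<(2::nat)^K. real (tree_dist (T s) (acc (T s) X t) (acc (T s) X (J t)) + 1))"
        by (rule sum.swap)
      also have "\<dots> \<le> (\<Sum>t=1..m. 2^K * 11 * u t)" by (rule sum_mono, rule conjunct2[OF J], assumption)
      also have "\<dots> = 2^K * (11 * UB l n X)" unfolding UBu by (simp add: sum_distrib_left mult.assoc)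
      finally show ?thesis .
    qed
    have "\<exists>s<(2::nat)^K. real (DistTree l (T s) X) \<le> 11 * UB l n X"
    proof (rule ccontr)
      assume "\<not> ?thesis"
      hence lt: "\<forall>s<(2::nat)^K. 11 * UB l n X < real (DistTree l (T s) X)" by auto
      have "(\<Sum>s<(2::nat)^K. 11 * UB l n X) < (\<Sum>s<(2::nat)^K. real (DistTree l (T s) X))"
      proof (rule sum_strict_mono)
        have "(0::nat) \<in> {..<2^K}" by simp
        thus "{..<(2::nat)^K} \<noteq> {}" by blast
      qed (use lt in auto)
      thus False using tot by simp
    qed
    then obtain s where "s < 2^K" "real (DistTree l (T s) X) \<le> 11 * UB l n X" by blast
    thus ?thesis using bstT setT by blast
  qed
qed simp

end
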